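(* Let $q,q',n$ be integers with $q'\ge 2q+1>4$ and $n>1$. Let $S$ be an $\mathcal{OS}_q(n)$ of period $m$ with ring sequence $[s_0,\ldots,s_{m-1}]$ where $s_0=0$. For $x\in\mathbb{Z}_q$ let $x'$ denote the class in $\mathbb{Z}_{q'}$ of the integer in $\{0,\ldots,q-1\}$ representing $x$. Let $S''$ be the sequence over $\mathbb{Z}_{q'}$ with ring sequence $[s_0',\ldots,s_{m-1}',-s_0',\ldots,-s_{m-1}']$. Define $t_i=(-1)^{i+m-1}s_i'$ if $s_i'\neq0$ and $t_i=(-1)^{i+m-1}q$ if $s_i'=0$ ($0\le i\le m-1$), and let $T'$ be the sequence over $\mathbb{Z}_{q'}$ with ring sequence $[t_0,\ldots,t_{m-1},-t_0,\ldots,-t_{m-1}]$. Then $S''$ and $T'$ are s-disjoint.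
   Context: For a periodic sequence $S=(s_i)$ write $\mathbf{s}_n(i)=(s_i,\ldots,s_{i+n-1})$; $\mathbf{u}^R$ is the reverse of a tuple and $-\mathbf{u}$ its termwise negative. An $n$-window sequence of period $m$ satisfies $\mathbf{s}_n(i)=\mathbf{s}_n(j)\Rightarrow i\equiv j\pmod m$; an $\mathcal{OS}_q(n)$ is a $q$-ary $n$-window sequence with $\mathbf{s}_n(i)\neq\mathbf{s}_n(j)^R$ for all $i,j$. The ring sequence of a sequence of period $m$ is one period. Two $n$-window sequences $S=(s_i)$, $T=(t_i)$ are s-disjoint if for all $i,j$: $\mathbf{s}_n(i)\neq\mathbf{t}_n(j)$, $\mathbf{s}_n(i)\neq\mathbf{t}_n(j)^R$ and $\mathbf{s}_n(i)\neq-\mathbf{t}_n(j)^R$. *)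

theory Defs
  imports Main
begin

(* Sequences are functions nat => int; elements of Z_q are represented by
   their canonical representatives in {0..<q}. *)

definition window :: "(nat \<Rightarrow> int) \<Rightarrow> nat \<Rightarrow> nat \<Rightarrow> int list" where
  "window s n i = map (\<lambda>k. s (i + k)) [0..<n]"

definition ring_seq :: "int list \<Rightarrow> nat \<Rightarrow> int" where
  "ring_seq xs i = xs ! (i mod length xs)"

definition neg_mod :: "int \<Rightarrow> int list \<Rightarrow> int list" where
  "neg_mod q xs = map (\<lambda>x. (- x) mod q) xs"

definition window_seq :: "(nat \<Rightarrow> int) \<Rightarrow> nat \<Rightarrow> nat \<Rightarrow> bool" where
  "window_seq s n m \<longleftrightarrow> m > 0 \<and> (\<forall>i. s (i + m) = s i) \<and>
     (\<forall>i j. window s n i = window s n j \<longrightarrow> i mod m = j mod m)"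

definition OS :: "int \<Rightarrow> nat \<Rightarrow> (nat \<Rightarrow> int) \<Rightarrow> nat \<Rightarrow> bool" where
  "OS q n s m \<longleftrightarrow> (\<forall>i. 0 \<le> s i \<and> s i < q) \<and> window_seq s n m \<and>
     (\<forall>i j. window s n i \<noteq> rev (window s n j))"

definition s_disjoint :: "int \<Rightarrow> nat \<Rightarrow> (nat \<Rightarrow> int) \<Rightarrow> (nat \<Rightarrow> int) \<Rightarrow> bool" where
  "s_disjoint q n S T \<longleftrightarrow> (\<forall>i j. window S n i \<noteq> window T n j \<and>
     window S n i \<noteq> rev (window T n j) \<and>
     window S n i \<noteq> neg_mod q (rev (window T n j)))"

end

theory Submission
  imports Defs
begin

lemma A_val:
  assumes "m > 0" "\<forall>i. 0 \<le> s i \<and> s i < q" "q' > q"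
  shows "ring_seq (map (\<lambda>i. s i mod q') [0..<m] @ map (\<lambda>i. (- s i) mod q') [0..<m]) k
     = (if k mod (2*m) < m then s (k mod (2*m)) else (- s (k mod (2*m) - m)) mod q')"
proof -
  have r: "k mod (2*m) < 2*m" using assms by simp
  have "s (k mod (2*m)) mod q' = s (k mod (2*m))"
    using assms by (meson mod_pos_pos_trivial order_less_trans)
  then show ?thesis using r unfolding ring_seq_def
    by (auto simp: nth_append mult_2)
qed

lemma B_val:
  assumes "m > 0"
  shows "ring_seq (let t = f in map t [0..<m] @ map (\<lambda>i. (- t i) mod q') [0..<m]) k
     = (if k mod (2*m) < m then f (k mod (2*m)) else (- f (k mod (2*m) - m)) mod q')"
proof -
  have r: "k mod (2*m) < 2*m" using assms by simp
  then show ?thesis unfolding ring_seq_def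
    by (auto simp: nth_append mult_2 Let_def)
qed

lemma mod_Suc2: "m > 0 \<Longrightarrow> Suc i mod (2*m) = (if i mod (2*m) = 2*m - 1 then 0 else Suc (i mod (2*m)))"
  by (simp add: mod_Suc) arith

lemma sgn_val:
  fixes u q q' :: int
  assumes "1 \<le> u" "u \<le> q" "q' \<ge> 2*q+1"
  shows "((-1)^e * u) mod q' = (if even e then u else q' - u)"
proof (cases "even e")
  case True then show ?thesis using assms by simp
next
  case False
  then have "((-1)^e * u) = - u" by simp
  moreover have "(-u) mod q' = q' - u" using assms
    by (smt (verit) mod_add_self2 mod_pos_pos_trivial)
  ultimately show ?thesis using False by simp
qed

lemma A_pair:
  fixes q q' :: int
  assumes m: "m > 0" and rng: "\<forall>i. 0 \<le> s i \<and> s i < q" and q': "q' \<ge> 2*q+1" and s0: "s 0 = 0"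
  defines "A \<equiv> ring_seq (map (\<lambda>i. s i mod q') [0..<m] @ map (\<lambda>i. (- s i) mod q') [0..<m])"
  shows "A i = 0 \<or> A (Suc i) = 0 \<or> (1 \<le> A i \<and> A i \<le> q - 1 \<and> 1 \<le> A (Suc i) \<and> A (Suc i) \<le> q - 1)
     \<or> (q' - q + 1 \<le> A i \<and> A i \<le> q' - 1 \<and> q' - q + 1 \<le> A (Suc i) \<and> A (Suc i) \<le> q' - 1)"
proof -
  have qq: "q' > q" using q' rng[rule_format, of 0] by linarith
  have AV: "A k = (if k mod (2*m) < m then s (k mod (2*m)) else (- s (k mod (2*m) - m)) mod q')" for k
    unfolding A_def by (rule A_val[OF m rng qq])
  have negv: "(- s j) mod q' = (if s j = 0 then 0 else q' - s j)" for j
  proof (cases "s j = 0")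
    case False
    then have "0 < s j" "s j < q" using rng by (auto simp: order_le_neq_trans)
    then show ?thesis using q' False
      by (smt (verit) mod_add_self2 mod_pos_pos_trivial)
  qed simp
  define r where "r = i mod (2*m)"
  have r: "r < 2*m" using m r_def by simp
  have S: "Suc i mod (2*m) = (if r = 2*m - 1 then 0 else Suc r)" using mod_Suc2[OF m] r_def by simp
  have Ai: "A i = (if r < m then s r else (- s (r - m)) mod q')" using AV r_def by simp
  have As: "A (Suc i) = (if r = 2*m-1 then s 0 else if Suc r < m then s (Suc r) else (- s (Suc r - m)) mod q')"
    using AV[of "Suc i"] S m by (auto)
  show ?thesis
  proof (cases "r < m")
    case True
    show ?thesis
    proof (cases "Suc r < m")
      case True
      then show ?thesis using Ai As rng[rule_format, of r] rng[rule_format, of "Suc r"] \<open>r < m\<close> by auto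
    next
      case False
      then have "Suc r - m = 0" "r \<noteq> 2*m-1" using True by auto
      then show ?thesis using As negv[of 0] s0 False by auto
    qed
  next
    case False
    show ?thesis
    proof (cases "r = 2*m-1")
      case True then show ?thesis using As s0 by simp
    next
      case F2: False
      then have "\<not> Suc r < m" using False by auto
      then show ?thesis using Ai As negv[of "r-m"] negv[of "Suc r - m"] False F2
          rng[rule_format, of "r-m"] rng[rule_format, of "Suc r - m"] by auto
    qed
  qed
qed

lemma B_pair:
  fixes q q' :: int
  assumes m: "m > 0" and rng: "\<forall>i. 0 \<le> s i \<and> s i < q" and q': "q' \<ge> 2*q+1" and s0: "s 0 = 0"
  defines "B \<equiv> ring_seq (let t = (\<lambda>i. ((-1) ^ (i + m - 1) * (if s i mod q' \<noteq> 0 then s i else q)) mod q')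
                      in map t [0..<m] @ map (\<lambda>i. (- t i) mod q') [0..<m])"
  shows "(1 \<le> B k \<and> B k \<le> q \<or> q' - q \<le> B k \<and> B k \<le> q' - 1)
    \<and> ((B k \<le> q \<and> B (Suc k) \<ge> q' - q) \<or> (B k \<ge> q' - q \<and> B (Suc k) \<le> q) \<or> B (Suc k) = q \<or> B (Suc k) = q' - q)"
proof -
  have qq: "q' > q" using q' rng[rule_format, of 0] by linarith
  define u where "u j = (if s j mod q' \<noteq> 0 then s j else q)" for j
  have smod: "s j mod q' = s j" for j using rng qq by (meson mod_pos_pos_trivial order_less_trans)
  have u: "1 \<le> u j \<and> u j \<le> q" for j using rng[rule_format, of j] rng[rule_format, of 0] smod[of j] unfolding u_def
    by auto
  have u0: "u 0 = q" using s0 unfolding u_def by simp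
  define g where "g j = (if even (j + m - 1) then u j else q' - u j)" for j
  have fg: "((-1) ^ (j + m - 1) * (if s j mod q' \<noteq> 0 then s j else q)) mod q' = g j" for j
    using sgn_val[of "u j" q q' "j + m - 1"] u[of j] q' unfolding g_def u_def by simp
  have g: "1 \<le> g j \<and> g j \<le> q' - 1" for j using u[of j] q' unfolding g_def by auto
  have ng: "(- g j) mod q' = q' - g j" for j using g[of j]
    by (smt (verit) mod_add_self2 mod_pos_pos_trivial)
  have BV: "B k = (if k mod (2*m) < m then g (k mod (2*m)) else q' - g (k mod (2*m) - m))" for k
  proof -
    have "(\<lambda>j. ((-1) ^ (j + m - 1) * (if s j mod q' \<noteq> 0 then s j else q)) mod q') = g"
      using fg by (intro ext) simp
    then have "B k = ring_seq (let t = g in map t [0..<m] @ map (\<lambda>i. (- t i) mod q') [0..<m]) k"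
      unfolding B_def by simp
    also have "\<dots> = (if k mod (2*m) < m then g (k mod (2*m)) else (- g (k mod (2*m) - m)) mod q')"
      by (rule B_val[OF m])
    finally show ?thesis using ng by simp
  qed
  show ?thesis
  proof (cases "k mod (2*m) < m")
    case True
    show ?thesis
    proof (cases "Suc (k mod (2*m)) < m")
      case T2: True
      have "even (Suc (k mod (2*m)) + m - 1) \<longleftrightarrow> \<not> even (k mod (2*m) + m - 1)" using m by auto
      then show ?thesis using BV[of k] BV[of "Suc k"] mod_Suc2[OF m, of k] T2 True
          u[of "k mod (2*m)"] u[of "Suc (k mod (2*m))"] unfolding g_def by (auto split: if_splits)
    next
      case False
      then have "Suc (k mod (2*m)) = m" using True by auto
      then have "Suc k mod (2*m) = m" using mod_Suc2[OF m, of k] m by auto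
      then have "B (Suc k) = q' - g 0" using BV[of "Suc k"] by simp
      then show ?thesis using BV[of k] True u0 g[of "k mod (2*m)"] u[of "k mod (2*m)"] q' unfolding g_def
        by (auto split: if_splits)
    qed
  next
    case False
    have r: "k mod (2*m) < 2*m" using m by simp
    show ?thesis
    proof (cases "k mod (2*m) = 2*m - 1")
      case True
      then have "Suc k mod (2*m) = 0" using mod_Suc2[OF m, of k] by simp
      then have "B (Suc k) = g 0" using BV[of "Suc k"] m by simp
      then show ?thesis using BV[of k] False u0 g[of "k mod (2*m) - m"] u[of "k mod (2*m) - m"] q' unfolding g_def
        by (auto split: if_splits)
    next
      case F2: False
      then have S: "Suc k mod (2*m) = Suc (k mod (2*m))" using mod_Suc2[OF m, of k] by simp
      have e: "Suc (k mod (2*m)) - m = Suc (k mod (2*m) - m)" using False by auto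
      have "even (Suc (k mod (2*m) - m) + m - 1) \<longleftrightarrow> \<not> even (k mod (2*m) - m + m - 1)" using m by auto
      then show ?thesis using BV[of k] BV[of "Suc k"] S e False
          u[of "k mod (2*m) - m"] u[of "Suc (k mod (2*m) - m)"] unfolding g_def by (auto split: if_splits)
    qed
  qed
qed

lemma win_nth: "k < n \<Longrightarrow> window S n i ! k = S (i + k)"
  unfolding window_def by simp

lemma win_len: "length (window S n i) = n"
  unfolding window_def by simp

theorem corollary3p17:
  fixes q q' :: int and n m :: nat and s :: "nat \<Rightarrow> int"
  assumes "q' \<ge> 2 * q + 1" and "2 * q + 1 > 4" and "n > 1"
    and "OS q n s m" and "s 0 = 0"
  shows "s_disjoint q' n
           (ring_seq (map (\<lambda>i. s i mod q') [0..<m] @ map (\<lambda>i. (- s i) mod q') [0..<m]))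
           (ring_seq (let t = (\<lambda>i. ((-1) ^ (i + m - 1) * (if s i mod q' \<noteq> 0 then s i else q)) mod q')
                      in map t [0..<m] @ map (\<lambda>i. (- t i) mod q') [0..<m]))"
proof -
  define A where "A = ring_seq (map (\<lambda>i. s i mod q') [0..<m] @ map (\<lambda>i. (- s i) mod q') [0..<m])"
  define B where "B = ring_seq (let t = (\<lambda>i. ((-1) ^ (i + m - 1) * (if s i mod q' \<noteq> 0 then s i else q)) mod q')
                      in map t [0..<m] @ map (\<lambda>i. (- t i) mod q') [0..<m])"
  have m: "m > 0" and rng: "\<forall>i. 0 \<le> s i \<and> s i < q" using assms(4) unfolding OS_def window_seq_def by auto
  note AP = A_pair[OF m rng assms(1) assms(5), folded A_def]
  note BP = B_pair[OF m rng assms(1) assms(5), folded B_def]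
  have nB: "(- B k) mod q' = q' - B k" for k
  proof -
    have b: "1 \<le> B k" "B k < q'" using BP[of k] assms(1,2) by auto
    have "(- B k) mod q' = (q' - B k) mod q'" by (metis diff_conv_add_uminus mod_add_self1)
    also have "\<dots> = q' - B k" using b by (intro mod_pos_pos_trivial) auto
    finally show ?thesis .
  qed
  have n0: "0 < n" "1 < n" using assms(3) by auto
  show ?thesis unfolding s_disjoint_def A_def[symmetric] B_def[symmetric]
  proof (intro allI conjI)
    fix i j
    show "window A n i \<noteq> window B n j"
    proof
      assume h: "window A n i = window B n j"
      have "A i = B j" "A (Suc i) = B (Suc j)"
        using arg_cong[OF h, of "\<lambda>l. l ! 0"] arg_cong[OF h, of "\<lambda>l. l ! 1"] n0 by (simp_all add: win_nth)
      then show False using AP[of i] BP[of j] BP[of "Suc j"] assms(1,2) by auto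
    qed
    define k where "k = j + n - 2"
    have k1: "j + (n - 1 - 0) = Suc k" "j + (n - 1 - 1) = k" using n0 k_def by auto
    show "window A n i \<noteq> rev (window B n j)"
    proof
      assume h: "window A n i = rev (window B n j)"
      have "A i = B (Suc k)" "A (Suc i) = B k"
        using arg_cong[OF h, of "\<lambda>l. l ! 0"] arg_cong[OF h, of "\<lambda>l. l ! 1"] n0 k1
        by (simp_all add: win_nth rev_nth win_len)
      then show False using AP[of i] BP[of k] BP[of "Suc k"] assms(1,2) by auto
    qed
    show "window A n i \<noteq> neg_mod q' (rev (window B n j))"
    proof
      assume h: "window A n i = neg_mod q' (rev (window B n j))"
      have "A i = q' - B (Suc k)" "A (Suc i) = q' - B k"
        using arg_cong[OF h, of "\<lambda>l. l ! 0"] arg_cong[OF h, of "\<lambda>l. l ! 1"] n0 k1 nB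
        by (simp_all add: win_nth rev_nth win_len neg_mod_def)
      then show False using AP[of i] BP[of k] BP[of "Suc k"] assms(1,2) by auto
    qed
  qed
qed

end
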